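(* Consider the stochastic Hydra game described below. From any hydra $H$ with root node $r$ satisfying $T(r)\ge\omega$ (and any current regrowth capacity), one can reach, in one round and with non-zero probabilities, an infinite sequence of hydras $H_1,H_2,\ldots$ with roots $r_1,r_2,\ldots$ such that the smallest ordinal larger than all of $T(r_1),T(r_2),\ldots$ is $T(r)$.
   Context: A hydra is a finite rooted tree; a head is a leaf (together with the edge to its parent). Ordinal mapping: for a hydra, define $T$ on its nodes by $T(v)=0$ for a leaf $v$, and for an internal node $v$ with children $v_1,\ldots,v_m$, $T(v)$ is the natural (Hessenberg) sum $\omega^{T(v_1)}\#\cdots\#\omega^{T(v_m)}$; values lie below $\varepsilon_0$. The game maintains a positive integer regrowth capacity $N$ (initially $4$). A round from hydra $H$: if $H$ is empty the game ends; otherwise Hercules chooses a leaf $l$; let $p$ be its parent and $g$ its grandparent (if it exists), and remove $l$. If $g$ exists, the Hydra nondeterministically repeatedly chooses whether to evolve: each evolution attempt ends the game (the Hydra dies) with probability $1/2$ and otherwise multiplies $N$ by $4$; thus after choosing exactly $m$ evolutions the game continues with probability $2^{-m}$ and capacity $N\cdot4^m$. Then, with $N'$ the current capacity, $N'-1$ copies of the (remaining) subtree rooted at $p$ are grown as new children of $g$. If $g$ does not exist, nothing grows. "Reach in one round with non-zero probability" means: for some choice of Hercules' leaf and the Hydra's nondeterministic choices, the resulting hydra occurs at the end of the round with positive probability. *)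

theory Defs
  imports Complex_Main "HOL-Library.Multiset"
begin

text \<open>An ordinal below epsilon_0 is represented by the multiset of exponents of its
  Cantor normal form: Om {#a1, ..., am#} denotes the natural sum
  omega^a1 # ... # omega^am (natural sum is order independent, so a multiset is exact,
  and the Cantor normal form is unique, so equality of representations is equality
  of ordinals).\<close>

datatype ord0 = Om "ord0 multiset"

text \<open>Ordinal comparison of Cantor normal forms (comparison of the descending exponent
  sequences), expressed as the Dershowitz--Manna extension of the order on exponents.\<close>

inductive lessO :: "ord0 \<Rightarrow> ord0 \<Rightarrow> bool" where
  "M \<noteq> N \<Longrightarrow>
   (\<forall>y. count N y < count M y \<longrightarrow> (\<exists>x. lessO y x \<and> count M x < count N x)) \<Longrightarrow>
   lessO (Om M) (Om N)"

definition leO :: "ord0 \<Rightarrow> ord0 \<Rightarrow> bool" where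
  "leO a b \<longleftrightarrow> lessO a b \<or> a = b"

definition zeroO :: ord0 where "zeroO = Om {#}"
definition oneO :: ord0 where "oneO = Om {#zeroO#}"
definition omegaO :: ord0 where "omegaO = Om {#oneO#}"

datatype hydra = Nd "hydra list"

fun T :: "hydra \<Rightarrow> ord0" where
  "T (Nd cs) = Om (mset (map T cs))"

definition del_at :: "nat \<Rightarrow> 'a list \<Rightarrow> 'a list" where
  "del_at i xs = take i xs @ drop (Suc i) xs"

text \<open>grow_step N m H H': Hercules cuts a head l whose grandparent g exists, the Hydra
  chooses exactly m evolutions (capacity becomes N' = N * 4^m), and N' - 1 copies of the
  remaining subtree at the parent p are added as new children of g.
  The rule grow handles the case where g is the root of the current (sub)tree; the rule
  descend locates g deeper in the tree.\<close>

inductive grow_step :: "nat \<Rightarrow> nat \<Rightarrow> hydra \<Rightarrow> hydra \<Rightarrow> bool" where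
  grow: "i < length cs \<Longrightarrow> cs ! i = Nd ps \<Longrightarrow> j < length ps \<Longrightarrow> ps ! j = Nd [] \<Longrightarrow>
         p' = Nd (del_at j ps) \<Longrightarrow>
         grow_step N m (Nd cs) (Nd (cs[i := p'] @ replicate (N * 4 ^ m - 1) p'))"
| descend: "i < length cs \<Longrightarrow> grow_step N m (cs ! i) c' \<Longrightarrow>
         grow_step N m (Nd cs) (Nd (cs[i := c']))"

text \<open>round_outcome N H H' q: starting from hydra H with regrowth capacity N, for some
  choice of Hercules' head and of the Hydra's nondeterministic choices, the round ends
  (the game continuing) with hydra H' with probability q.\<close>

inductive round_outcome :: "nat \<Rightarrow> hydra \<Rightarrow> hydra \<Rightarrow> real \<Rightarrow> bool" where
  root_cut: "i < length cs \<Longrightarrow> cs ! i = Nd [] \<Longrightarrow> round_outcome N (Nd cs) (Nd (del_at i cs)) 1"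
| evolve: "grow_step N m H H' \<Longrightarrow> round_outcome N H H' (1 / 2 ^ m)"

definition reach_one_round :: "nat \<Rightarrow> hydra \<Rightarrow> hydra \<Rightarrow> bool" where
  "reach_one_round N H H' \<longleftrightarrow> (\<exists>q > 0. round_outcome N H H' q)"

end

theory Submission
  imports Defs "HOL-Library.Multiset_Order"
begin


fun ms :: "ord0 \<Rightarrow> ord0 multiset" where "ms (Om M) = M"

lemma ms_inj: "ms a = ms b \<Longrightarrow> a = b"
  by (cases a; cases b) auto

lemma lessO_HO: "lessO a b \<longleftrightarrow> multp\<^sub>H\<^sub>O lessO (ms a) (ms b)"
proof
  assume "lessO a b" then show "multp\<^sub>H\<^sub>O lessO (ms a) (ms b)"
    by cases (auto simp: multp\<^sub>H\<^sub>O_def)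
next
  assume "multp\<^sub>H\<^sub>O lessO (ms a) (ms b)" then show "lessO a b"
    by (cases a; cases b) (auto simp: multp\<^sub>H\<^sub>O_def intro: lessO.intros)
qed

lemma size_elem: "x \<in># ms a \<Longrightarrow> size x < size a"
  apply (cases a) apply simp
  by (metis Suc_le_lessD add.commute le_add1 multi_member_split size_multiset_add_mset trans_less_add1 le_imp_less_Suc less_Suc_eq_le plus_1_eq_Suc)

lemma size_pos: "size (a::ord0) > 0"
  by (cases a) auto

lemma ord_on: "transp_on {a. size a \<le> n} lessO \<and> asymp_on {a. size a \<le> n} lessO \<and> totalp_on {a. size a \<le> n} lessO"
proof (induction n)
  case 0
  then show ?case using size_pos
    by (auto simp: transp_on_def asymp_on_def totalp_on_def) (metis not_less0)+
next
  case (Suc n)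
  let ?A = "{a. size a \<le> n}" and ?B = "{a::ord0. size a \<le> Suc n}"
  have sub: "\<And>M. M \<in> ms ` ?B \<Longrightarrow> set_mset M \<subseteq> ?A"
    using size_elem by fastforce
  have t: "transp_on (ms ` ?B) (multp\<^sub>H\<^sub>O lessO)"
    using transp_on_multp\<^sub>H\<^sub>O[OF _ _ sub] Suc.IH by blast
  have a: "asymp_on (ms ` ?B) (multp\<^sub>H\<^sub>O lessO)"
    using asymp_on_multp\<^sub>H\<^sub>O[OF _ _ sub] Suc.IH by blast
  have to: "totalp_on (ms ` ?B) (multp\<^sub>H\<^sub>O lessO)"
    using totalp_on_multp\<^sub>H\<^sub>O[OF _ sub] Suc.IH by blast
  have "transp_on ?B lessO"
  proof (rule transp_onI)
    fix a b c assume "a \<in> ?B" "b \<in> ?B" "c \<in> ?B" "lessO a b" "lessO b c"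
    then have "multp\<^sub>H\<^sub>O lessO (ms a) (ms b)" "multp\<^sub>H\<^sub>O lessO (ms b) (ms c)"
      using lessO_HO by blast+
    then have "multp\<^sub>H\<^sub>O lessO (ms a) (ms c)"
      using t[THEN transp_onD] \<open>a \<in> ?B\<close> \<open>b \<in> ?B\<close> \<open>c \<in> ?B\<close> by blast
    then show "lessO a c" using lessO_HO by blast
  qed
  moreover have "asymp_on ?B lessO"
  proof (rule asymp_onI)
    fix a b assume "a \<in> ?B" "b \<in> ?B" "lessO a b"
    then have "multp\<^sub>H\<^sub>O lessO (ms a) (ms b)" using lessO_HO by blast
    then have "\<not> multp\<^sub>H\<^sub>O lessO (ms b) (ms a)"
      using a[THEN asymp_onD] \<open>a \<in> ?B\<close> \<open>b \<in> ?B\<close> by blast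
    then show "\<not> lessO b a" using lessO_HO by blast
  qed
  moreover have "totalp_on ?B lessO"
  proof (rule totalp_onI)
    fix a b assume "a \<in> ?B" "b \<in> ?B" "a \<noteq> b"
    then have "ms a \<noteq> ms b" using ms_inj by blast
    then have "multp\<^sub>H\<^sub>O lessO (ms a) (ms b) \<or> multp\<^sub>H\<^sub>O lessO (ms b) (ms a)"
      using to[THEN totalp_onD] \<open>a \<in> ?B\<close> \<open>b \<in> ?B\<close> by blast
    then show "lessO a b \<or> lessO b a" using lessO_HO by blast
  qed
  ultimately show ?case by blast
qed

lemma lessO_trans: "lessO a b \<Longrightarrow> lessO b c \<Longrightarrow> lessO a c"
  using ord_on[of "max (size a) (max (size b) (size c))"] unfolding transp_on_def by (metis max.cobounded1 max.cobounded2 max.coboundedI2 mem_Collect_eq)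

lemma lessO_asym: "lessO a b \<Longrightarrow> \<not> lessO b a"
  using ord_on[of "max (size a) (size b)"] unfolding asymp_on_def by auto

lemma lessO_total: "a \<noteq> b \<Longrightarrow> lessO a b \<or> lessO b a"
  using ord_on[of "max (size a) (size b)"] unfolding totalp_on_def by auto

instantiation ord0 :: linorder
begin
definition less_ord0 :: "ord0 \<Rightarrow> ord0 \<Rightarrow> bool" where "less_ord0 = lessO"
definition less_eq_ord0 :: "ord0 \<Rightarrow> ord0 \<Rightarrow> bool" where "less_eq_ord0 = leO"
instance
proof
  fix x y z :: ord0
  show "(x < y) = (x \<le> y \<and> \<not> y \<le> x)"
    unfolding less_ord0_def less_eq_ord0_def leO_def using lessO_asym by blast
  show "x \<le> x" unfolding less_eq_ord0_def leO_def by simp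
  show "x \<le> y \<Longrightarrow> y \<le> z \<Longrightarrow> x \<le> z"
    unfolding less_eq_ord0_def leO_def using lessO_trans by blast
  show "x \<le> y \<Longrightarrow> y \<le> x \<Longrightarrow> x = y"
    unfolding less_eq_ord0_def leO_def using lessO_asym by blast
  show "x \<le> y \<or> y \<le> x"
    unfolding less_eq_ord0_def leO_def using lessO_total by blast
qed
end

lemma lessO_less: "lessO a b \<longleftrightarrow> a < b" by (simp add: less_ord0_def)
lemma leO_le: "leO a b \<longleftrightarrow> a \<le> b" by (simp add: less_eq_ord0_def)

lemma Om_less: "Om M < Om N \<longleftrightarrow> M < N"
proof -
  have "Om M < Om N \<longleftrightarrow> lessO (Om M) (Om N)" by (simp add: lessO_less)
  also have "\<dots> \<longleftrightarrow> multp\<^sub>H\<^sub>O lessO M N" using lessO_HO[of "Om M" "Om N"] by simp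
  also have "\<dots> \<longleftrightarrow> M < N" unfolding less_multiset\<^sub>H\<^sub>O multp\<^sub>H\<^sub>O_def lessO_less by blast
  finally show ?thesis .
qed

lemma Om_le: "Om M \<le> Om N \<longleftrightarrow> M \<le> N"
  unfolding le_less Om_less by simp



lemma succ_lemma:
  fixes Bm C :: "'a::linorder multiset"
  assumes hB: "\<forall>x\<in>#Bm. g \<le> x" and hC: "\<forall>x\<in>#C. g \<le> x" and lt: "Bm < C"
  shows "add_mset g Bm \<le> C"
proof (cases "add_mset g Bm = C")
  case True then show ?thesis by simp
next
  case False
  from lt have ne: "Bm \<noteq> C" and ho: "\<And>y. count C y < count Bm y \<Longrightarrow> \<exists>x>y. count Bm x < count C x"
    unfolding less_multiset\<^sub>H\<^sub>O by auto
  have "add_mset g Bm < C"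
    unfolding less_multiset\<^sub>H\<^sub>O
  proof (intro conjI allI impI False)
    fix y assume y: "count C y < count (add_mset g Bm) y"
    then have "0 < count (add_mset g Bm) y" by simp
    then have "y \<in># add_mset g Bm" by (simp only: count_greater_zero_iff)
    then have gy: "g \<le> y" using hB by auto
    show "\<exists>x>y. count (add_mset g Bm) x < count C x"
    proof (cases "y = g")
      case False
      then have "count C y < count Bm y" using y by simp
      then obtain x where "x > y" "count Bm x < count C x" using ho by blast
      then show ?thesis using gy by (intro exI[of _ x]) auto
    next
      case True
      show ?thesis
      proof (cases "count C g < count Bm g")
        case True
        then obtain x where "x > g" "count Bm x < count C x" using ho by blast
        then show ?thesis using \<open>y = g\<close> by (intro exI[of _ x]) auto
      next
        case F2: False
        then have eqg: "count C g = count Bm g" using y True by simp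
        obtain z where z: "count Bm z \<noteq> count C z" using ne by (meson multiset_eqI)
        then have "z \<in># Bm \<or> z \<in># C" by (metis count_inI)
        then have "g \<le> z" using hB hC by auto
        with z eqg have zg: "z > g" by (metis order_le_less)
        show ?thesis
        proof (cases "count Bm z < count C z")
          case True then show ?thesis using zg \<open>y = g\<close> by (intro exI[of _ z]) auto
        next
          case False
          then have "count C z < count Bm z" using z by simp
          then obtain x where "x > z" "count Bm x < count C x" using ho by blast
          then show ?thesis using zg \<open>y = g\<close> by (intro exI[of _ x]) auto
        qed
      qed
    qed
  qed
  then show ?thesis by simp
qed

lemma G1:
  fixes Bm K :: "'a::linorder multiset"
  assumes hB: "\<forall>x\<in>#Bm. g \<le> x" and lt: "K < add_mset g Bm"
  shows "filter_mset (\<lambda>x. g \<le> x) K \<le> Bm"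
proof (rule ccontr)
  assume "\<not> ?thesis"
  then have "Bm < filter_mset (\<lambda>x. g \<le> x) K" by simp
  then have "add_mset g Bm \<le> filter_mset (\<lambda>x. g \<le> x) K"
    using succ_lemma[OF hB] by auto
  also have "\<dots> \<le> K" by (rule subset_eq_imp_le_multiset) simp
  finally show False using lt by simp
qed

lemma G2:
  fixes Bm K :: "'a::linorder multiset"
  assumes hB: "\<forall>x\<in>#Bm. g \<le> x" and lt: "filter_mset (\<lambda>x. g \<le> x) K < Bm"
  shows "K < Bm"
proof -
  let ?H = "filter_mset (\<lambda>x. g \<le> x) K"
  from lt have ne: "?H \<noteq> Bm" and ho: "\<And>y. count Bm y < count ?H y \<Longrightarrow> \<exists>x>y. count ?H x < count Bm x"
    unfolding less_multiset\<^sub>H\<^sub>O by auto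
  have ex: "\<exists>z. count ?H z < count Bm z"
  proof (rule ccontr)
    assume "\<not> ?thesis"
    then have ge: "\<And>z. count Bm z \<le> count ?H z" by (meson not_le)
    then obtain z where "count Bm z < count ?H z" using ne by (metis multiset_eqI order_le_less)
    then obtain x where "count ?H x < count Bm x" using ho by blast
    then show False using ge[of x] by simp
  qed
  then obtain z where z: "count ?H z < count Bm z" by blast
  then have zg: "g \<le> z" using hB by (metis count_greater_zero_iff gr_implies_not0 not_gr_zero)
  have cK: "\<And>x. g \<le> x \<Longrightarrow> count K x = count ?H x" by simp
  show ?thesis
    unfolding less_multiset\<^sub>H\<^sub>O
  proof (intro conjI allI impI)
    show "K \<noteq> Bm"
    proof
      assume "K = Bm"
      then have "?H = Bm" using hB by (intro multiset_eqI) (metis count_eq_zero_iff count_filter_mset)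
      then show False using ne by simp
    qed
  next
    fix y assume y: "count Bm y < count K y"
    show "\<exists>x>y. count K x < count Bm x"
    proof (cases "g \<le> y")
      case True
      then have "count Bm y < count ?H y" using y by simp
      then obtain x where x: "x > y" "count ?H x < count Bm x" using ho by blast
      then have "g \<le> x" using True by (meson less_imp_le order_trans)
      then show ?thesis using x by (intro exI[of _ x]) auto
    next
      case False
      then have "y < z" using zg by (meson not_le order.strict_trans2)
      then show ?thesis using z zg by (intro exI[of _ z]) auto
    qed
  qed
qed

lemma Cof:
  fixes Bm K L :: "'a::linorder multiset"
  assumes hB: "\<forall>x\<in>#Bm. g \<le> x" and lt: "K < add_mset g Bm"
    and lo: "filter_mset (\<lambda>x. x < g) K < L"
  shows "K < Bm + L"
proof -
  have "filter_mset (\<lambda>x. g \<le> x) K \<le> Bm" using G1[OF hB lt] .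
  then show ?thesis
  proof (cases "filter_mset (\<lambda>x. g \<le> x) K < Bm")
    case True
    then have "K < Bm" by (rule G2[OF hB])
    also have "Bm \<le> Bm + L" by (rule subset_eq_imp_le_multiset) simp
    finally show ?thesis .
  next
    case False
    then have eq: "filter_mset (\<lambda>x. g \<le> x) K = Bm" using \<open>filter_mset (\<lambda>x. g \<le> x) K \<le> Bm\<close> by simp
    have "K = filter_mset (\<lambda>x. g \<le> x) K + filter_mset (\<lambda>x. \<not> g \<le> x) K" by (rule multiset_partition)
    also have "filter_mset (\<lambda>x. \<not> g \<le> x) K = filter_mset (\<lambda>x. x < g) K" by (simp add: not_le)
    finally have kk: "K = Bm + filter_mset (\<lambda>x. x < g) K" using eq by simp
    have "Bm + filter_mset (\<lambda>x. x < g) K < Bm + L" using lo by simp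
    then show ?thesis by (subst kk)
  qed
qed



fun kids :: "hydra \<Rightarrow> hydra list" where "kids (Nd cs) = cs"

lemma T_leaf: "T (Nd []) = zeroO" by (simp add: zeroO_def)

lemma mset_del_at: "i < length xs \<Longrightarrow> mset (del_at i xs) = mset xs - {#xs!i#}"
proof -
  assume i: "i < length xs"
  have "mset xs = mset (take i xs @ xs!i # drop (Suc i) xs)" by (rule arg_cong[OF id_take_nth_drop[OF i], of mset])
  then show ?thesis unfolding del_at_def by simp
qed

lemma zero_le: "zeroO \<le> x"
  by (cases x) (simp add: zeroO_def Om_le)

lemma below_succ: "x < Om (add_mset zeroO D) \<Longrightarrow> x \<le> Om D"
proof (cases x)
  case (Om X)
  assume "x < Om (add_mset zeroO D)"
  then have "X < add_mset zeroO D" using Om Om_less by simp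
  then have "filter_mset (\<lambda>y. zeroO \<le> y) X \<le> D" using G1[of D zeroO X] zero_le by blast
  moreover have "filter_mset (\<lambda>y. zeroO \<le> y) X = X" using zero_le by simp
  ultimately show ?thesis using Om Om_le by simp
qed

lemma descent:
  assumes N: "N > 0"
  shows "kids X \<noteq> [] \<Longrightarrow> (\<forall>c\<in>set (kids X). c \<noteq> Nd []) \<Longrightarrow>
    \<exists>Xs :: nat \<Rightarrow> hydra. (\<forall>i. \<exists>m. grow_step N m X (Xs i)) \<and> (\<forall>i. T (Xs i) < T X) \<and> (\<forall>b < T X. \<exists>i. b < T (Xs i))"
proof (induction X)
  case (Nd cs)
  have ne: "cs \<noteq> []" and nl: "\<forall>c\<in>set cs. c \<noteq> Nd []" using Nd.prems by auto
  define g where "g = Min (T ` set cs)"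
  have "g \<in> T ` set cs" unfolding g_def using ne by (intro Min_in) auto
  then obtain c where c: "c \<in> set cs" "T c = g" by auto
  then obtain k where k: "k < length cs" "cs ! k = c" by (metis in_set_conv_nth)
  have gmin: "\<forall>c'\<in>set cs. g \<le> T c'" unfolding g_def by auto
  define Ms where "Ms = mset (map T cs)"
  define Bm where "Bm = Ms - {#g#}"
  have "g \<in># Ms" unfolding Ms_def using c by auto
  then have MsB: "Ms = add_mset g Bm" unfolding Bm_def by simp
  have hB: "\<forall>x\<in>#Bm. g \<le> x"
  proof
    fix x assume "x \<in># Bm"
    then have "x \<in># Ms" unfolding Bm_def by (meson in_diffD)
    then show "g \<le> x" unfolding Ms_def using gmin by auto
  qed
  have TX: "T (Nd cs) = Om (add_mset g Bm)" using MsB unfolding Ms_def by simp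
  have upd: "\<And>x. mset (map T (cs[k := x])) = add_mset (T x) Bm"
    using k(1) unfolding Bm_def Ms_def by (simp add: map_update mset_update k c)
  obtain ps where cps: "c = Nd ps" by (cases c)
  have psne: "ps \<noteq> []" using nl c cps by auto
  show ?case
  proof (cases "\<exists>j<length ps. ps ! j = Nd []")
    case True
    then obtain j where j: "j < length ps" "ps ! j = Nd []" by blast
    define p' where "p' = Nd (del_at j ps)"
    define D where "D = mset (map T ps) - {#zeroO#}"
    have "zeroO \<in># mset (map T ps)" using j T_leaf by (metis in_set_conv_nth length_map nth_map set_mset_mset)
    then have psD: "mset (map T ps) = add_mset zeroO D" unfolding D_def by simp
    have gD: "g = Om (add_mset zeroO D)" using c cps psD by simp
    have "map T (del_at j ps) = del_at j (map T ps)" unfolding del_at_def by (simp add: take_map drop_map)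
    then have "mset (map T (del_at j ps)) = mset (map T ps) - {#zeroO#}"
      using mset_del_at[of j "map T ps"] j T_leaf by simp
    then have Tp': "T p' = Om D" unfolding p'_def D_def by simp
    define Xs where "Xs m = Nd (cs[k := p'] @ replicate (N * 4 ^ m - 1) p')" for m :: nat
    have TXs: "T (Xs m) = Om (Bm + replicate_mset (N * 4 ^ m) (Om D))" for m
    proof -
      have pos: "N * 4 ^ m = Suc (N * 4 ^ m - 1)" using N by simp
      show ?thesis unfolding Xs_def using upd Tp'
        by (simp add: replicate_mset_def) (subst pos, simp)
    qed
    have dg: "Om D < g" unfolding gD Om_less by (rule le_multiset_right_total)
    have "(\<forall>i. \<exists>m. grow_step N m (Nd cs) (Xs i)) \<and> (\<forall>i. T (Xs i) < T (Nd cs)) \<and> (\<forall>b<T (Nd cs). \<exists>i. b < T (Xs i))"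
    proof (intro conjI allI impI)
      fix m
      show "\<exists>m'. grow_step N m' (Nd cs) (Xs m)"
        unfolding Xs_def using grow[OF k(1) _ j(1) j(2) p'_def, of N m] k(2) cps by auto
    next
      fix m
      have "replicate_mset (N * 4 ^ m) (Om D) < {#g#}" using dg by simp
      then have "Bm + replicate_mset (N * 4 ^ m) (Om D) < Bm + {#g#}" by simp
      then show "T (Xs m) < T (Nd cs)" unfolding TXs TX Om_less by simp
    next
      fix b assume "b < T (Nd cs)"
      obtain K where bK: "b = Om K" by (cases b)
      have lt: "K < add_mset g Bm" using \<open>b < T (Nd cs)\<close> unfolding bK TX Om_less .
      define lo where "lo = filter_mset (\<lambda>x. x < g) K"
      have loD: "\<forall>x\<in>#lo. x \<le> Om D" unfolding lo_def using below_succ gD by auto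
      define n where "n = N * 4 ^ size lo"
      have aux: "n' < 4 ^ n'" for n' :: nat by (induction n') auto
      have "size lo < 4 ^ size lo" by (rule aux)
      also have "\<dots> \<le> n" unfolding n_def using N by simp
      finally have szn: "size lo < n" .
      have "lo < replicate_mset n (Om D)"
        unfolding less_multiset\<^sub>H\<^sub>O
      proof (intro conjI allI impI)
        show "lo \<noteq> replicate_mset n (Om D)" using szn by auto
      next
        fix y assume y: "count (replicate_mset n (Om D)) y < count lo y"
        then have "y \<in># lo" by (metis count_inI less_nat_zero_code)
        then have "y \<le> Om D" using loD by auto
        moreover have "y \<noteq> Om D" using y count_le_size[of lo y] szn by auto
        ultimately have "y < Om D" by simp
        moreover have "count lo (Om D) < count (replicate_mset n (Om D)) (Om D)"
          using count_le_size[of lo "Om D"] szn by simp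
        ultimately show "\<exists>x>y. count lo x < count (replicate_mset n (Om D)) x" by blast
      qed
      then have "K < Bm + replicate_mset n (Om D)" using Cof[OF hB lt] unfolding lo_def by blast
      then show "\<exists>i. b < T (Xs i)" unfolding bK TXs Om_less n_def by blast
    qed
    then show ?thesis by blast
  next
    case False
    have kc: "kids c \<noteq> []" using psne cps by simp
    have nlc: "\<forall>c'\<in>set (kids c). c' \<noteq> Nd []"
    proof
      fix c' assume "c' \<in> set (kids c)"
      then obtain j where "j < length ps" "ps ! j = c'" using cps by (auto simp: in_set_conv_nth)
      then show "c' \<noteq> Nd []" using False by blast
    qed
    obtain Ys :: "nat \<Rightarrow> hydra" where Ys0: "\<forall>i. \<exists>m. grow_step N m c (Ys i)" "\<forall>i. T (Ys i) < T c"
      "\<forall>b<T c. \<exists>i. b < T (Ys i)" using Nd.IH[OF c(1) kc nlc] by blast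
    have Ys: "\<And>i. \<exists>m. grow_step N m c (Ys i)" "\<And>i. T (Ys i) < g"
      "\<And>b. b < g \<Longrightarrow> \<exists>i. b < T (Ys i)" using Ys0 c(2) by auto
    define Xs where "Xs i = Nd (cs[k := Ys i])" for i :: nat
    have TXs: "T (Xs i) = Om (add_mset (T (Ys i)) Bm)" for i unfolding Xs_def using upd by simp
    have "(\<forall>i. \<exists>m. grow_step N m (Nd cs) (Xs i)) \<and> (\<forall>i. T (Xs i) < T (Nd cs)) \<and> (\<forall>b<T (Nd cs). \<exists>i. b < T (Xs i))"
    proof (intro conjI allI impI)
      fix i
      show "\<exists>m. grow_step N m (Nd cs) (Xs i)"
        using Ys(1)[of i] descend[OF k(1)] k(2) unfolding Xs_def by auto
    next
      fix i
      show "T (Xs i) < T (Nd cs)" unfolding TXs TX Om_less using Ys(2)[of i] by (rule add_mset_lt_left_lt)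
    next
      fix b assume "b < T (Nd cs)"
      obtain K where bK: "b = Om K" by (cases b)
      have lt: "K < add_mset g Bm" using \<open>b < T (Nd cs)\<close> unfolding bK TX Om_less .
      define lo where "lo = filter_mset (\<lambda>x. x < g) K"
      obtain i where i: "lo < {#T (Ys i)#}"
      proof (cases "lo = {#}")
        case True then show ?thesis using that[of 0] by simp
      next
        case False
        then have "Max_mset lo \<in># lo" by simp
        then have "Max_mset lo < g" unfolding lo_def by simp
        then obtain i where "Max_mset lo < T (Ys i)" using Ys(3) by blast
        then have "\<forall>x\<in>#lo. x < T (Ys i)" by (meson Max_ge finite_set_mset le_less_trans)
        then have "lo < {#T (Ys i)#}" by simp
        then show ?thesis using that by blast
      qed
      then have "K < Bm + {#T (Ys i)#}" using Cof[OF hB lt] unfolding lo_def by blast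
      then show "\<exists>i. b < T (Xs i)" unfolding bK TXs Om_less by auto
    qed
    then show ?thesis by blast
  qed
qed



theorem lemma2p2:
  fixes H :: hydra and N :: nat
  assumes "N > 0"
    and "leO omegaO (T H)"
  shows "\<exists>Hs :: nat \<Rightarrow> hydra.
           (\<forall>i. reach_one_round N H (Hs i)) \<and>
           (\<forall>i. lessO (T (Hs i)) (T H)) \<and>
           (\<forall>b. (\<forall>i. lessO (T (Hs i)) b) \<longrightarrow> leO (T H) b)"
proof -
  obtain cs where H: "H = Nd cs" by (cases H)
  show ?thesis
  proof (cases "\<exists>i<length cs. cs!i = Nd []")
    case True
    then obtain i where i: "i < length cs" "cs!i = Nd []" by blast
    define D where "D = mset (map T cs) - {#zeroO#}"
    have "zeroO \<in># mset (map T cs)" using i T_leaf by (metis in_set_conv_nth length_map nth_map set_mset_mset)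
    then have csD: "mset (map T cs) = add_mset zeroO D" unfolding D_def by simp
    have TH: "T H = Om (add_mset zeroO D)" using H csD by simp
    have "map T (del_at i cs) = del_at i (map T cs)" unfolding del_at_def by (simp add: take_map drop_map)
    then have "mset (map T (del_at i cs)) = mset (map T cs) - {#zeroO#}"
      using mset_del_at[of i "map T cs"] i T_leaf by simp
    then have TH': "T (Nd (del_at i cs)) = Om D" unfolding D_def by simp
    have "round_outcome N (Nd cs) (Nd (del_at i cs)) 1" by (rule root_cut[OF i])
    then have r: "reach_one_round N H (Nd (del_at i cs))" unfolding reach_one_round_def H
      by (intro exI[of _ 1]) simp
    have lt: "lessO (Om D) (T H)" unfolding TH lessO_less Om_less by (rule le_multiset_right_total)
    have sup: "leO (T H) b" if "lessO (Om D) b" for b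
    proof -
      from that have "Om D < b" by (simp add: lessO_less)
      show "leO (T H) b" unfolding leO_le TH
      proof (rule ccontr)
        assume "\<not> Om (add_mset zeroO D) \<le> b"
        then have "b < Om (add_mset zeroO D)" by simp
        then have "b \<le> Om D" by (rule below_succ)
        then show False using \<open>Om D < b\<close> by simp
      qed
    qed
    show ?thesis
    proof (rule exI[of _ "\<lambda>_. Nd (del_at i cs)"], intro conjI allI impI)
      fix j show "reach_one_round N H (Nd (del_at i cs))" by (rule r)
    next
      fix j show "lessO (T (Nd (del_at i cs))) (T H)" using lt TH' by simp
    next
      fix b assume "\<forall>j::nat. lessO (T (Nd (del_at i cs))) b"
      then show "leO (T H) b" using sup TH' by simp
    qed
  next
    case False
    have ne: "cs \<noteq> []"
    proof
      assume "cs = []"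
      then have "T H = Om {#}" using H by simp
      then have "omegaO \<le> Om {#}" using assms(2) leO_le by simp
      then show False unfolding omegaO_def Om_le by simp
    qed
    have nl: "\<forall>c\<in>set (kids H). c \<noteq> Nd []"
    proof
      fix c assume "c \<in> set (kids H)"
      then obtain j where "j < length cs" "cs ! j = c" using H by (auto simp: in_set_conv_nth)
      then show "c \<noteq> Nd []" using False by blast
    qed
    have kH: "kids H \<noteq> []" using ne H by simp
    obtain Xs :: "nat \<Rightarrow> hydra" where Xs: "\<forall>i. \<exists>m. grow_step N m H (Xs i)" "\<forall>i. T (Xs i) < T H"
      "\<forall>b<T H. \<exists>i. b < T (Xs i)"
      using descent[OF assms(1) kH nl] by blast
    show ?thesis
    proof (rule exI[of _ Xs], intro conjI allI impI)
      fix i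
      obtain m where "grow_step N m H (Xs i)" using Xs(1) by blast
      then have "round_outcome N H (Xs i) (1/2^m)" by (rule evolve)
      then show "reach_one_round N H (Xs i)" unfolding reach_one_round_def
        by (intro exI[of _ "1/2^m"]) simp
    next
      fix i show "lessO (T (Xs i)) (T H)" using Xs(2) lessO_less by blast
    next
      fix b assume a: "\<forall>i. lessO (T (Xs i)) b"
      show "leO (T H) b" unfolding leO_le
      proof (rule ccontr)
        assume "\<not> T H \<le> b" then have "b < T H" by simp
        then obtain i where "b < T (Xs i)" using Xs(3) by blast
        moreover have "T (Xs i) < b" using a lessO_less by blast
        ultimately show False by simp
      qed
    qed
  qed
qed

end
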